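(* Let $K=2m+1$ with $m\ge 3$ and suppose $t=KM/N=K-2$. Then the D2D coded caching rate $R=N/M-1$ is achievable with subpacketization $F=K(K-2)$.
   Context: D2D coded caching setting: there are $N\ge 1$ files $W_1,\dots,W_N$ and $K\ge 2$ users, each with a cache of size $M$ files, $0<M\le N$, and $t:=KM/N$ is assumed to be a positive integer. A D2D coded caching scheme with (uncoded placement and) subpacketization $F\in\mathbb{N}_+$ is defined as follows. Fix a packet size $b\ge 1$; each file is a sequence of $F$ packets $W_n=(W_n^{(1)},\dots,W_n^{(F)})$, $W_n^{(j)}\in\{0,1\}^b$. Placement: each user $k\in[K]$ stores the packets $\{W_n^{(j)}:(n,j)\in Z_k\}$ for a fixed index set $Z_k\subseteq[N]\times[F]$ with $|Z_k|\le MF$ (independent of demands and file contents). Delivery: for every demand vector $\mathbf d=(d_1,\dots,d_K)\in[N]^K$, each user $k$ broadcasts to all other users $\ell_k(\mathbf d)\in\mathbb{N}$ blocks in $\{0,1\}^b$, each a deterministic function of the packets stored by user $k$; it is required that for all file contents each user $k$ can recover all $F$ packets of $W_{d_k}$ from its stored packets and the blocks sent by the other users. The rate is $R=\max_{\mathbf d}\frac{1}{F}\sum_{k=1}^K\ell_k(\mathbf d)$ (transmitted bits normalized by the file size $Fb$). The rate $R$ is achievable with subpacketization $F$ if such a scheme with rate $R$ exists for every packet size $b\ge 1$. *)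

theory Defs
  imports Complex_Main "HOL-Library.FuncSet"
begin

text \<open>Files are indexed by n in {1..N}, packets by j in {1..F}, users by k in {1..K}.
  A file library W maps (n, j) to a packet (a bit string, bool list).\<close>

definition valid_files :: "nat \<Rightarrow> nat \<Rightarrow> nat \<Rightarrow> (nat \<Rightarrow> nat \<Rightarrow> bool list) \<Rightarrow> bool" where
  "valid_files N F b W \<longleftrightarrow> (\<forall>n\<in>{1..N}. \<forall>j\<in>{1..F}. length (W n j) = b)"

definition cache_content :: "(nat \<times> nat) set \<Rightarrow> (nat \<Rightarrow> nat \<Rightarrow> bool list) \<Rightarrow> (nat \<times> nat \<Rightarrow> bool list)" where
  "cache_content Z W = (\<lambda>p. if p \<in> Z then W (fst p) (snd p) else [])"

definition demands :: "nat \<Rightarrow> nat \<Rightarrow> (nat \<Rightarrow> nat) set" where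
  "demands N K = {1..K} \<rightarrow>\<^sub>E {1..N}"

text \<open>Z k: placement index set of user k; l d k: number of blocks sent by user k under
  demand d; enc d k: the blocks sent by user k, a function of the packets it stores;
  dec d k: decoder of user k, from its stored packets and the blocks sent by the other users.\<close>
definition d2d_scheme :: "nat \<Rightarrow> nat \<Rightarrow> real \<Rightarrow> nat \<Rightarrow> nat \<Rightarrow> real \<Rightarrow> bool" where
  "d2d_scheme N K M F b R \<longleftrightarrow>
    (\<exists>(Z :: nat \<Rightarrow> (nat \<times> nat) set) (l :: (nat \<Rightarrow> nat) \<Rightarrow> nat \<Rightarrow> nat)
      (enc :: (nat \<Rightarrow> nat) \<Rightarrow> nat \<Rightarrow> (nat \<times> nat \<Rightarrow> bool list) \<Rightarrow> bool list list)
      (dec :: (nat \<Rightarrow> nat) \<Rightarrow> nat \<Rightarrow> (nat \<times> nat \<Rightarrow> bool list) \<Rightarrow> (nat \<Rightarrow> bool list list) \<Rightarrow> nat \<Rightarrow> bool list).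
      (\<forall>k\<in>{1..K}. Z k \<subseteq> {1..N} \<times> {1..F} \<and> real (card (Z k)) \<le> M * real F) \<and>
      (\<forall>d\<in>demands N K. \<forall>k\<in>{1..K}. \<forall>W. valid_files N F b W \<longrightarrow>
          length (enc d k (cache_content (Z k) W)) = l d k \<and>
          (\<forall>x\<in>set (enc d k (cache_content (Z k) W)). length x = b)) \<and>
      (\<forall>d\<in>demands N K. \<forall>k\<in>{1..K}. \<forall>W. valid_files N F b W \<longrightarrow>
          (\<forall>j\<in>{1..F}.
             dec d k (cache_content (Z k) W)
               (\<lambda>i. if i \<in> {1..K} \<and> i \<noteq> k then enc d i (cache_content (Z i) W) else [])
               j = W (d k) j)) \<and>
      R = Max ((\<lambda>d. (\<Sum>k=1..K. real (l d k)) / real F) ` demands N K))"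

definition achievable_with_subpack :: "nat \<Rightarrow> nat \<Rightarrow> real \<Rightarrow> real \<Rightarrow> nat \<Rightarrow> bool" where
  "achievable_with_subpack N K M R F \<longleftrightarrow> F \<ge> 1 \<and> (\<forall>b\<ge>1. d2d_scheme N K M F b R)"

end

theory Submission
  imports Defs
begin


lemma card_split:
  assumes "finite A" "k \<in> A"
  shows "card {y\<in>A. P y} = card {y\<in>A. y \<noteq> k \<and> P y} + (if P k then 1 else 0)"
proof (cases "P k")
  case True
  have "{y\<in>A. P y} = insert k {y\<in>A. y \<noteq> k \<and> P y}" using True assms by auto
  then show ?thesis using True assms by simp
next
  case False
  have "{y\<in>A. P y} = {y\<in>A. y \<noteq> k \<and> P y}" using False by auto
  then show ?thesis using False by simp
qed

lemma odd_split:
  assumes "k < (K::nat)"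
  shows "odd (card {y. y < K \<and> P y}) \<noteq> odd (card {y. y < K \<and> y \<noteq> k \<and> P y}) \<longleftrightarrow> P k"
proof -
  have "card {y\<in>{..<K}. P y} = card {y\<in>{..<K}. y \<noteq> k \<and> P y} + (if P k then 1 else 0)"
    by (rule card_split) (use assms in auto)
  moreover have "{y\<in>{..<K}. P y} = {y. y < K \<and> P y}" by auto
  moreover have "{y\<in>{..<K}. y \<noteq> k \<and> P y} = {y. y < K \<and> y \<noteq> k \<and> P y}" by auto
  ultimately show ?thesis by auto
qed

lemma abstract_scheme:
  fixes N K F b :: nat and M :: real and miss :: "nat \<Rightarrow> nat \<Rightarrow> bool"
    and zt :: "nat \<Rightarrow> nat \<Rightarrow> nat" and slot :: "nat \<Rightarrow> nat \<Rightarrow> nat \<Rightarrow> nat"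
  assumes N1: "N \<ge> 1"
    and A0: "\<And>u s. u < K \<Longrightarrow> s < 2 \<Longrightarrow> zt u s \<noteq> u"
    and A1: "\<And>u s y. u < K \<Longrightarrow> s < 2 \<Longrightarrow> y < K \<Longrightarrow> y \<noteq> u \<Longrightarrow> y \<noteq> zt u s \<Longrightarrow>
           slot u s y < F \<and> (\<forall>w<K. miss w (slot u s y) \<longleftrightarrow> w = y \<or> w = zt u s)"
    and A2: "\<And>y q. y < K \<Longrightarrow> q < F \<Longrightarrow> miss y q \<Longrightarrow>
           \<exists>u<K. \<exists>s<2. y \<noteq> u \<and> y \<noteq> zt u s \<and> slot u s y = q"
    and A3: "\<And>y. y < K \<Longrightarrow> real N * real (card {q. q < F \<and> \<not> miss y q}) \<le> M * real F"
  shows "d2d_scheme N K M F b (2 * real K / real F)"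
proof -
  define Z :: "nat \<Rightarrow> (nat \<times> nat) set" where
    "Z k = {1..N} \<times> {j. 1 \<le> j \<and> j \<le> F \<and> \<not> miss (k - 1) (j - 1)}" for k
  define served where "served u s y \<longleftrightarrow> y < K \<and> y \<noteq> u \<and> y \<noteq> zt u s" for u s y
  define blk :: "(nat \<times> nat \<Rightarrow> bool list) \<Rightarrow> (nat \<Rightarrow> nat) \<Rightarrow> nat \<Rightarrow> nat \<Rightarrow> bool list" where
    "blk C d u s = map (\<lambda>i. odd (card {y. y < K \<and> served u s y \<and> C (d (y + 1), slot u s y + 1) ! i})) [0..<b]"
    for C d u s
  define enc :: "(nat \<Rightarrow> nat) \<Rightarrow> nat \<Rightarrow> (nat \<times> nat \<Rightarrow> bool list) \<Rightarrow> bool list list" where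
    "enc d k C = [blk C d (k - 1) 0, blk C d (k - 1) 1]" for d k C
  define l :: "(nat \<Rightarrow> nat) \<Rightarrow> nat \<Rightarrow> nat" where "l d k = 2" for d k
  define pick where "pick k j = (SOME us. fst us < K \<and> snd us < 2 \<and> k - 1 \<noteq> fst us \<and>
       k - 1 \<noteq> zt (fst us) (snd us) \<and> slot (fst us) (snd us) (k - 1) = j - 1)" for k j
  define dec :: "(nat \<Rightarrow> nat) \<Rightarrow> nat \<Rightarrow> (nat \<times> nat \<Rightarrow> bool list) \<Rightarrow> (nat \<Rightarrow> bool list list) \<Rightarrow> nat \<Rightarrow> bool list" where
    "dec d k C Y j = (if \<not> miss (k - 1) (j - 1) then C (d k, j) else
       map (\<lambda>i. (Y (fst (pick k j) + 1) ! snd (pick k j) ! i) \<noteq>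
          odd (card {y. y < K \<and> y \<noteq> k - 1 \<and> served (fst (pick k j)) (snd (pick k j)) y \<and>
                C (d (y + 1), slot (fst (pick k j)) (snd (pick k j)) y + 1) ! i})) [0..<b])"
    for d k C Y j
  have P1: "\<forall>k\<in>{1..K}. Z k \<subseteq> {1..N} \<times> {1..F} \<and> real (card (Z k)) \<le> M * real F"
  proof
    fix k assume k: "k \<in> {1..K}"
    have "{j. 1 \<le> j \<and> j \<le> F \<and> \<not> miss (k - 1) (j - 1)} = Suc ` {q. q < F \<and> \<not> miss (k - 1) q}"
    proof (intro set_eqI iffI)
      fix x assume "x \<in> {j. 1 \<le> j \<and> j \<le> F \<and> \<not> miss (k - 1) (j - 1)}"
      then show "x \<in> Suc ` {q. q < F \<and> \<not> miss (k - 1) q}"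
        by (intro image_eqI[of _ _ "x - 1"]) auto
    qed auto
    then have "card {j. 1 \<le> j \<and> j \<le> F \<and> \<not> miss (k - 1) (j - 1)} = card {q. q < F \<and> \<not> miss (k - 1) q}"
      by (simp add: card_image)
    then have "card (Z k) = N * card {q. q < F \<and> \<not> miss (k - 1) q}"
      by (simp add: Z_def card_cartesian_product)
    moreover have "real N * real (card {q. q < F \<and> \<not> miss (k - 1) q}) \<le> M * real F"
      using A3[of "k - 1"] k by auto
    ultimately show "Z k \<subseteq> {1..N} \<times> {1..F} \<and> real (card (Z k)) \<le> M * real F"
      by (auto simp: Z_def)
  qed
  have encW: "enc d k (cache_content (Z k) W) =
      [blk (\<lambda>p. W (fst p) (snd p)) d (k - 1) 0, blk (\<lambda>p. W (fst p) (snd p)) d (k - 1) 1]"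
    if d: "d \<in> demands N K" and k: "k \<in> {1..K}" for d k W
  proof -
    have "blk (cache_content (Z k) W) d (k - 1) s = blk (\<lambda>p. W (fst p) (snd p)) d (k - 1) s" if s: "s < 2" for s
    proof -
      have "(y < K \<and> served (k - 1) s y \<and> cache_content (Z k) W (d (y + 1), slot (k - 1) s y + 1) ! i) =
            (y < K \<and> served (k - 1) s y \<and> W (d (y + 1)) (slot (k - 1) s y + 1) ! i)" for y i
      proof (cases "y < K \<and> served (k - 1) s y")
        case True
        have km: "k - 1 < K" using k by auto
        have h: "slot (k - 1) s y < F \<and> (\<forall>w<K. miss w (slot (k - 1) s y) \<longleftrightarrow> w = y \<or> w = zt (k - 1) s)"
          using A1[of "k - 1" s y] km s True by (auto simp: served_def)
        then have "\<not> miss (k - 1) (slot (k - 1) s y)" using True km A0[of "k - 1" s] s h by (auto simp: served_def)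
        moreover have "d (y + 1) \<in> {1..N}" using d True by (auto simp: demands_def PiE_iff)
        ultimately have "(d (y + 1), slot (k - 1) s y + 1) \<in> Z k" using h by (auto simp: Z_def)
        then show ?thesis by (simp add: cache_content_def)
      qed auto
      then show ?thesis by (simp add: blk_def)
    qed
    then show ?thesis by (simp add: enc_def)
  qed
  have P2: "\<forall>d\<in>demands N K. \<forall>k\<in>{1..K}. \<forall>W. valid_files N F b W \<longrightarrow>
          length (enc d k (cache_content (Z k) W)) = l d k \<and>
          (\<forall>x\<in>set (enc d k (cache_content (Z k) W)). length x = b)"
    by (auto simp: encW l_def blk_def)
  have P3: "\<forall>d\<in>demands N K. \<forall>k\<in>{1..K}. \<forall>W. valid_files N F b W \<longrightarrow>
          (\<forall>j\<in>{1..F}.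
             dec d k (cache_content (Z k) W)
               (\<lambda>i. if i \<in> {1..K} \<and> i \<noteq> k then enc d i (cache_content (Z i) W) else [])
               j = W (d k) j)"
  proof (intro ballI allI impI)
    fix d k W j
    assume d: "d \<in> demands N K" and k: "k \<in> {1..K}" and W: "valid_files N F b W" and j: "j \<in> {1..F}"
    have dk: "d k \<in> {1..N}" using d k by (auto simp: demands_def PiE_iff)
    have lenW: "length (W (d k) j) = b" using W dk j by (auto simp: valid_files_def)
    show "dec d k (cache_content (Z k) W)
               (\<lambda>i. if i \<in> {1..K} \<and> i \<noteq> k then enc d i (cache_content (Z i) W) else []) j = W (d k) j"
    proof (cases "miss (k - 1) (j - 1)")
      case False
      then have "(d k, j) \<in> Z k" using dk j by (auto simp: Z_def)
      then show ?thesis using False by (simp add: dec_def cache_content_def)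
    next
      case True
      have "\<exists>u<K. \<exists>s<2. k - 1 \<noteq> u \<and> k - 1 \<noteq> zt u s \<and> slot u s (k - 1) = j - 1"
        using A2[of "k - 1" "j - 1"] True k j by auto
      then have "\<exists>us. fst us < K \<and> snd us < 2 \<and> k - 1 \<noteq> fst us \<and>
       k - 1 \<noteq> zt (fst us) (snd us) \<and> slot (fst us) (snd us) (k - 1) = j - 1" by auto
      then have pk: "fst (pick k j) < K \<and> snd (pick k j) < 2 \<and> k - 1 \<noteq> fst (pick k j) \<and>
       k - 1 \<noteq> zt (fst (pick k j)) (snd (pick k j)) \<and> slot (fst (pick k j)) (snd (pick k j)) (k - 1) = j - 1"
        unfolding pick_def by (rule someI_ex)
      define u where "u = fst (pick k j)"
      define s where "s = snd (pick k j)"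
      have u: "u < K" "s < 2" "k - 1 \<noteq> u" "k - 1 \<noteq> zt u s" "slot u s (k - 1) = j - 1"
        using pk by (auto simp: u_def s_def)
      have u1: "u + 1 \<in> {1..K}" "u + 1 \<noteq> k" using u k by auto
      define P where "P i y \<longleftrightarrow> served u s y \<and> W (d (y + 1)) (slot u s y + 1) ! i" for i y
      have Ys: "enc d (u + 1) (cache_content (Z (u + 1)) W) ! s = blk (\<lambda>p. W (fst p) (snd p)) d u s"
        using encW[OF d u1(1), of W] u(2) by (auto simp: less_2_cases_iff)
      have other: "(y < K \<and> y \<noteq> k - 1 \<and> served u s y \<and> cache_content (Z k) W (d (y + 1), slot u s y + 1) ! i)
          = (y < K \<and> y \<noteq> k - 1 \<and> P i y)" for y i
      proof (cases "y < K \<and> y \<noteq> k - 1 \<and> served u s y")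
        case True
        then have h: "slot u s y < F \<and> (\<forall>w<K. miss w (slot u s y) \<longleftrightarrow> w = y \<or> w = zt u s)"
          using A1[of u s y] u by (auto simp: served_def)
        then have "\<not> miss (k - 1) (slot u s y)" using True k u by auto
        moreover have "d (y + 1) \<in> {1..N}" using d True by (auto simp: demands_def PiE_iff)
        ultimately have "(d (y + 1), slot u s y + 1) \<in> Z k" using h by (auto simp: Z_def)
        then show ?thesis by (simp add: cache_content_def P_def)
      qed (auto simp: P_def)
      have Pk: "P i (k - 1) = W (d k) j ! i" for i
        using u k j by (auto simp: P_def served_def)
      have "dec d k (cache_content (Z k) W)
               (\<lambda>i. if i \<in> {1..K} \<and> i \<noteq> k then enc d i (cache_content (Z i) W) else []) j =
            map (\<lambda>i. odd (card {y. y < K \<and> P i y}) \<noteq> odd (card {y. y < K \<and> y \<noteq> k - 1 \<and> P i y})) [0..<b]"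
        using True u1 Ys other
        by (simp add: dec_def u_def[symmetric] s_def[symmetric] blk_def P_def conj_assoc) auto
      also have "\<dots> = map (\<lambda>i. W (d k) j ! i) [0..<b]"
      proof (rule map_cong[OF refl])
        fix i
        have "k - 1 < K" using k by auto
        from odd_split[OF this, of "P i"] Pk[of i]
        show "(odd (card {y. y < K \<and> P i y}) \<noteq> odd (card {y. y < K \<and> y \<noteq> k - 1 \<and> P i y})) = W (d k) j ! i"
          by simp
      qed
      also have "\<dots> = W (d k) j" using lenW map_nth[of "W (d k) j"] by simp
      finally show "dec d k (cache_content (Z k) W)
               (\<lambda>i. if i \<in> {1..K} \<and> i \<noteq> k then enc d i (cache_content (Z i) W) else []) j = W (d k) j" .
    qed
  qed
  have ne: "demands N K \<noteq> {}"
  proof -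
    have "(\<lambda>k. if k \<in> {1..K} then 1 else undefined) \<in> demands N K" using N1 by (auto simp: demands_def)
    then show ?thesis by auto
  qed
  have P4: "2 * real K / real F = Max ((\<lambda>d. (\<Sum>k=1..K. real (l d k)) / real F) ` demands N K)"
  proof -
    have "(\<lambda>d. (\<Sum>k=1..K. real (l d k)) / real F) ` demands N K = {2 * real K / real F}"
      using ne by (auto simp: l_def)
    then show ?thesis by simp
  qed
  show ?thesis unfolding d2d_scheme_def
    apply (rule exI[of _ Z])
    apply (rule exI[of _ l])
    apply (rule exI[of _ enc])
    apply (rule exI[of _ dec])
    using P1 P2 P3 P4 by (intro conjI)
qed



definition pk :: "nat \<Rightarrow> nat \<Rightarrow> nat \<Rightarrow> nat" where "pk L x a = x * L + (a - 1)"
definition miss0 :: "nat \<Rightarrow> nat \<Rightarrow> nat \<Rightarrow> bool" where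
  "miss0 K y q \<longleftrightarrow> y = q div (K - 2) \<or> y = (q div (K - 2) + q mod (K - 2) + 1) mod K"
definition zt0 :: "nat \<Rightarrow> nat \<Rightarrow> nat \<Rightarrow> nat" where
  "zt0 K u s = (if s = 0 then (u + K - 1) mod K else (u + 1) mod K)"
definition slot0 :: "nat \<Rightarrow> nat \<Rightarrow> nat \<Rightarrow> nat \<Rightarrow> nat" where
  "slot0 K u s y = (let z = zt0 K u s; dd = (y + K - z) mod K in
     if s = 0 then (if dd \<le> K - 2 then pk (K - 2) z dd else pk (K - 2) y 1)
     else (if dd = 1 then pk (K - 2) z 1 else pk (K - 2) y (K - dd)))"

lemma modK: "0 < (K::nat) \<Longrightarrow> n < 2 * K \<Longrightarrow> n mod K = (if n < K then n else n - K)"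
  by (simp add: le_mod_geq)

lemma divr: "r < (L::nat) \<Longrightarrow> (x * L + r) div L = x"
  by simp
lemma modr: "r < (L::nat) \<Longrightarrow> (x * L + r) mod L = r"
  by simp
lemma pk_div: "0 < L \<Longrightarrow> 1 \<le> a \<Longrightarrow> a \<le> L \<Longrightarrow> pk L x a div L = x"
  unfolding pk_def by (rule divr) simp
lemma pk_mod: "0 < L \<Longrightarrow> 1 \<le> a \<Longrightarrow> a \<le> L \<Longrightarrow> pk L x a mod L = a - 1"
  unfolding pk_def by (rule modr) simp
lemma pk_inj: "0 < L \<Longrightarrow> 1 \<le> a \<Longrightarrow> a \<le> L \<Longrightarrow> 1 \<le> a' \<Longrightarrow> a' \<le> L \<Longrightarrow>
   pk L x a = pk L x' a' \<longleftrightarrow> x = x' \<and> a = a'"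
proof
  assume h: "0 < L" "1 \<le> a" "a \<le> L" "1 \<le> a'" "a' \<le> L" and e: "pk L x a = pk L x' a'"
  have "x = x'" using pk_div[OF h(1-3), of x] pk_div[OF h(1) h(4,5), of x'] e by simp
  moreover have "a - 1 = a' - 1" using pk_mod[OF h(1-3), of x] pk_mod[OF h(1) h(4,5), of x'] e by simp
  ultimately show "x = x' \<and> a = a'" using h by simp
qed simp
lemma pk_lt: "x < K \<Longrightarrow> 1 \<le> a \<Longrightarrow> a \<le> L \<Longrightarrow> pk L x a < K * L"
proof -
  assume h: "x < K" "1 \<le> a" "a \<le> L"
  have "pk L x a < x * L + L" using h unfolding pk_def by simp
  also have "\<dots> = (x + 1) * L" by simp
  also have "\<dots> \<le> K * L" using h by (intro mult_right_mono) auto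
  finally show ?thesis .
qed

lemma miss_pk:
  assumes "3 \<le> K" "x < K" "1 \<le> a" "a \<le> K - 2"
  shows "miss0 K w (pk (K - 2) x a) \<longleftrightarrow> w = x \<or> w = (x + a) mod K"
  using assms by (simp add: miss0_def pk_div pk_mod)

lemma zt_lt: "0 < K \<Longrightarrow> zt0 K u s < K"
  by (simp add: zt0_def)

lemma zt_expl: "2 \<le> K \<Longrightarrow> u < K \<Longrightarrow> zt0 K u s =
   (if s = 0 then (if u = 0 then K - 1 else u - 1) else (if u + 1 = K then 0 else u + 1))"
  by (auto simp: zt0_def modK)

lemma C1:
  assumes K: "3 \<le> K" and u: "u < K" "s < 2" "y < K" "y \<noteq> u" "y \<noteq> zt0 K u s"
  shows "\<exists>x a. slot0 K u s y = pk (K - 2) x a \<and> x < K \<and> 1 \<le> a \<and> a \<le> K - 2 \<and>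
     ((x = y \<and> (x + a) mod K = zt0 K u s) \<or> (x = zt0 K u s \<and> (x + a) mod K = y))"
proof -
  define z where "z = zt0 K u s"
  have zl: "z < K" using K by (simp add: z_def zt_lt)
  have ze: "z = (if s = 0 then (if u = 0 then K - 1 else u - 1) else (if u + 1 = K then 0 else u + 1))"
    using K u by (simp add: z_def zt_expl)
  define dd where "dd = (y + K - z) mod K"
  have dde: "dd = (if z \<le> y then y - z else y + K - z)"
    using K zl u by (auto simp: dd_def modK)
  have yz: "y \<noteq> z" using u by (simp add: z_def)
  have sl: "slot0 K u s y = (if s = 0 then (if dd \<le> K - 2 then pk (K - 2) z dd else pk (K - 2) y 1)
     else (if dd = 1 then pk (K - 2) z 1 else pk (K - 2) y (K - dd)))"
    by (simp add: slot0_def z_def dd_def Let_def)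
  have G: "\<exists>x a. slot0 K u s y = pk (K - 2) x a \<and> x < K \<and> 1 \<le> a \<and> a \<le> K - 2 \<and>
     ((x = y \<and> (x + a) mod K = z) \<or> (x = z \<and> (x + a) mod K = y))"
  proof -
    consider "s = 0" | "s = 1" using u by linarith
    then show ?thesis
    proof cases
      case 1
      show ?thesis
      proof (cases "dd \<le> K - 2")
        case True
        have "(z + dd) mod K = y" using K zl u yz dde by (auto simp: modK)
        moreover have "1 \<le> dd" using dde yz zl u by auto
        moreover have "slot0 K u s y = pk (K - 2) z dd" using True sl 1 by simp
        ultimately show ?thesis using True zl by blast
      next
        case False
        have "(y + 1) mod K = z" using K zl u yz dde ze 1 False by (auto simp: modK split: if_splits)
        moreover have "slot0 K u s y = pk (K - 2) y 1" using False sl 1 by simp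
        moreover have "(1::nat) \<le> K - 2" using K by simp
        ultimately show ?thesis using u by blast
      qed
    next
      case 2
      show ?thesis
      proof (cases "dd = 1")
        case True
        have "(z + 1) mod K = y" using K zl u yz dde True by (auto simp: modK split: if_splits)
        moreover have "slot0 K u s y = pk (K - 2) z 1" using True sl 2 by simp
        moreover have "(1::nat) \<le> K - 2" using K by simp
        ultimately show ?thesis using zl by blast
      next
        case False
        have "2 \<le> dd" "dd \<le> K - 1" using K zl u yz dde ze 2 False by (auto split: if_splits)
        moreover have "(y + (K - dd)) mod K = z" using K zl u yz dde by (auto simp: modK)
        moreover have "slot0 K u s y = pk (K - 2) y (K - dd)" using False sl 2 by simp
        ultimately have "slot0 K u s y = pk (K - 2) y (K - dd) \<and> y < K \<and> 1 \<le> K - dd \<and> K - dd \<le> K - 2 \<and>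
            ((y = y \<and> (y + (K - dd)) mod K = z) \<or> (y = z \<and> (y + (K - dd)) mod K = y))"
          using u by auto
        then show ?thesis by blast
      qed
    qed
  qed
  then show ?thesis by (simp add: z_def)
qed

lemma C2:
  assumes K: "3 \<le> K" and y: "y < K" and q: "q < K * (K - 2)" and m: "miss0 K y q"
  shows "\<exists>u<K. \<exists>s<2. y \<noteq> u \<and> y \<noteq> zt0 K u s \<and> slot0 K u s y = q"
proof -
  define L where "L = K - 2"
  have L: "0 < L" using K by (simp add: L_def)
  define x where "x = q div L"
  define a where "a = q mod L + 1"
  have qe: "q = pk L x a" unfolding pk_def x_def a_def by simp
  have xl: "x < K" using q L unfolding x_def L_def by (simp add: less_mult_imp_div_less)
  have a1: "1 \<le> a" "a \<le> L" using L by (auto simp: a_def Suc_le_eq)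
  have mm: "y = x \<or> y = (x + a) mod K" using m by (simp add: miss0_def x_def a_def L_def)
  have KL: "K - 2 = L" by (simp add: L_def)
  consider "y = x" "2 \<le> a" | "y = x" "a = 1" | "y \<noteq> x" "y = (x + a) mod K" "2 \<le> a"
    | "y \<noteq> x" "y = (x + a) mod K" "a = 1" using mm a1 by linarith
  then show ?thesis
  proof cases
    case 1
    define z where "z = (if y + a < K then y + a else y + a - K)"
    define u where "u = (if z = 0 then K - 1 else z - 1)"
    have zl: "z < K" "u < K" using y a1 K L_def by (auto simp: z_def u_def)
    have zt: "zt0 K u 1 = z" using K zl by (simp add: zt_expl) (auto simp: u_def)
    have dd: "(y + K - z) mod K = K - a" using K y a1 L_def by (auto simp: z_def modK)
    have sl: "slot0 K u 1 y = pk L y a"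
    proof -
      have "K - a \<noteq> 1" "K - (K - a) = a" using a1 L_def K by auto
      then show ?thesis using dd zt by (simp add: slot0_def Let_def KL)
    qed
    have "y \<noteq> u" "y \<noteq> z" using K y a1 L_def 1 by (auto simp: z_def u_def)
    then have "y \<noteq> u \<and> y \<noteq> zt0 K u 1 \<and> slot0 K u 1 y = q" using zt sl qe 1 by simp
    moreover have "(1::nat) < 2" by simp
    ultimately show ?thesis using zl by blast
  next
    case 2
    define z where "z = (if y + 1 = K then 0 else y + 1)"
    define u where "u = (if z + 1 = K then 0 else z + 1)"
    have zl: "z < K" "u < K" using y K by (auto simp: z_def u_def)
    have zt: "zt0 K u 0 = z" using K zl by (simp add: zt_expl) (auto simp: u_def)
    have dd: "(y + K - z) mod K = K - 1" using K y by (auto simp: z_def modK)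
    have sl: "slot0 K u 0 y = pk L y 1"
    proof -
      have "\<not> K - 1 \<le> K - 2" using K by simp
      then show ?thesis using dd zt by (simp add: slot0_def Let_def KL)
    qed
    have "y \<noteq> u" "y \<noteq> z" using K y by (auto simp: z_def u_def)
    then have "y \<noteq> u \<and> y \<noteq> zt0 K u 0 \<and> slot0 K u 0 y = q" using zt sl qe 2 by simp
    moreover have "(0::nat) < 2" by simp
    ultimately show ?thesis using zl by blast
  next
    case 3
    define u where "u = (if x + 1 = K then 0 else x + 1)"
    have zl: "u < K" using xl K by (auto simp: u_def)
    have zt: "zt0 K u 0 = x" using K zl xl by (simp add: zt_expl) (auto simp: u_def)
    have ye: "y = (if x + a < K then x + a else x + a - K)" using 3 K xl a1 L_def by (simp add: modK)
    have dd: "(y + K - x) mod K = a" using K xl a1 L_def ye by (auto simp: modK)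
    have sl: "slot0 K u 0 y = pk L x a"
      using dd zt a1 by (simp add: slot0_def Let_def KL)
    have "y \<noteq> u" using K ye xl a1 L_def 3 by (auto simp: u_def)
    then have "y \<noteq> u \<and> y \<noteq> zt0 K u 0 \<and> slot0 K u 0 y = q" using zt sl qe 3 by simp
    moreover have "(0::nat) < 2" by simp
    ultimately show ?thesis using zl by blast
  next
    case 4
    define u where "u = (if x = 0 then K - 1 else x - 1)"
    have zl: "u < K" using xl K by (auto simp: u_def)
    have zt: "zt0 K u 1 = x" using K zl xl by (simp add: zt_expl) (auto simp: u_def)
    have ye: "y = (if x + 1 < K then x + 1 else 0)" using 4 K xl by (simp add: modK)
    have dd: "(y + K - x) mod K = 1" using K xl ye by (auto simp: modK)
    have sl: "slot0 K u 1 y = pk L x 1"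
      using dd zt by (simp add: slot0_def Let_def KL)
    have "y \<noteq> u" using K ye xl by (auto simp: u_def)
    then have "y \<noteq> u \<and> y \<noteq> zt0 K u 1 \<and> slot0 K u 1 y = q" using zt sl qe 4 by simp
    moreover have "(1::nat) < 2" by simp
    ultimately show ?thesis using zl by blast
  qed
qed

lemma C3:
  assumes K: "3 \<le> K" and y: "y < K"
  shows "card {q. q < K * (K - 2) \<and> \<not> miss0 K y q} \<le> (K - 2) * (K - 2)"
proof -
  define L where "L = K - 2"
  have L: "0 < L" using K by (simp add: L_def)
  define A where "A = (\<lambda>a. pk L y a) ` {1..L}"
  define B where "B = (\<lambda>a. pk L ((y + K - a) mod K) a) ` {1..L}"
  have Bx: "(y + K - a) mod K < K" for a using K by simp
  have Bm: "((y + K - a) mod K + a) mod K = y" if "a \<le> L" for a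
  proof -
    have "((y + K - a) mod K + a) mod K = (y + K - a + a) mod K" by (simp add: mod_add_left_eq)
    also have "y + K - a + a = y + K" using that L_def by simp
    finally show ?thesis using y by simp
  qed
  have Bne: "(y + K - a) mod K \<noteq> y" if "1 \<le> a" "a \<le> L" for a
    using that y K L_def by (auto simp: modK)
  have AM: "A \<subseteq> {q. miss0 K y q}" using K y by (auto simp: A_def L_def miss_pk)
  have BM: "B \<subseteq> {q. miss0 K y q}"
  proof
    fix q assume "q \<in> B"
    then obtain a where a: "a \<in> {1..L}" "q = pk L ((y + K - a) mod K) a" by (auto simp: B_def)
    then show "q \<in> {q. miss0 K y q}" using K Bx[of a] Bm[of a] by (auto simp: L_def miss_pk)
  qed
  have AL: "A \<subseteq> {..<K * L}" using y by (auto simp: A_def pk_lt)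
  have BL: "B \<subseteq> {..<K * L}" using Bx by (auto simp: B_def pk_lt)
  have cA: "card A = L" unfolding A_def
    by (subst card_image) (auto simp: inj_on_def pk_inj L)
  have cB: "card B = L" unfolding B_def
    by (subst card_image) (auto simp: inj_on_def pk_inj L)
  have ne: "pk L y a \<noteq> pk L ((y + K - a') mod K) a'" if "a \<in> {1..L}" "a' \<in> {1..L}" for a a'
  proof
    assume "pk L y a = pk L ((y + K - a') mod K) a'"
    then have "y = (y + K - a') mod K" using that L pk_inj by auto
    then show False using Bne[of a'] that by auto
  qed
  have dis: "A \<inter> B = {}"
    unfolding A_def B_def using ne by blast
  have cAB: "card (A \<union> B) = 2 * L"
    using cA cB dis by (simp add: card_Un_disjoint A_def B_def)
  have "{q. q < K * (K - 2) \<and> \<not> miss0 K y q} \<subseteq> {..<K * L} - (A \<union> B)"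
    using AM BM by (auto simp: L_def)
  then have "card {q. q < K * (K - 2) \<and> \<not> miss0 K y q} \<le> card ({..<K * L} - (A \<union> B))"
    by (intro card_mono) auto
  also have "\<dots> = K * L - 2 * L" proof -
    have "A \<union> B \<subseteq> {..<K * L}" using AL BL by auto
    moreover have "finite (A \<union> B)" using AL BL finite_subset by blast
    ultimately show ?thesis using cAB by (simp add: card_Diff_subset)
  qed
  also have "\<dots> = (K - 2) * L" by (simp add: diff_mult_distrib)
  finally show ?thesis by (simp add: L_def)
qed


theorem mainTheorem6:
  fixes N K m :: nat and M :: real
  assumes "N \<ge> 1" and "0 < M" and "M \<le> real N"
    and "m \<ge> 3" and "K = 2 * m + 1"
    and "real K * M / real N = real K - 2"
  shows "achievable_with_subpack N K M (real N / M - 1) (K * (K - 2))"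
proof -
  have K3: "3 \<le> K" using assms(4,5) by simp
  have N0: "real N > 0" using assms(1) by simp
  have KM: "real K * M = (real K - 2) * real N"
    using assms(6) N0 by (simp add: field_simps)
  have rK2: "real (K - 2) = real K - 2" using K3 by (simp add: of_nat_diff)
  have rK: "real K - 2 > 0" using K3 by simp
  have Kpos: "real K > 0" using K3 by simp
  have Mv: "M = (real K - 2) * real N / real K" using KM Kpos by (simp add: field_simps)
  have R: "real N / M - 1 = 2 * real K / real (K * (K - 2))"
  proof -
    have e1: "real N / M = real K / (real K - 2)" using Mv N0 rK Kpos assms(2) by (simp add: field_simps)
    have e2: "real K / (real K - 2) - 1 = 2 / (real K - 2)" using rK by (simp add: field_simps)
    have e3: "real (K * (K - 2)) = real K * (real K - 2)" using rK2 by simp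
    have e4: "2 * real K / (real K * (real K - 2)) = 2 / (real K - 2)" using Kpos by simp
    have "real N / M - 1 = 2 / (real K - 2)" by (simp only: e1 e2)
    also have "\<dots> = 2 * real K / real (K * (K - 2))" by (simp only: e3 e4)
    finally show ?thesis .
  qed
  have scheme: "d2d_scheme N K M (K * (K - 2)) b (2 * real K / real (K * (K - 2)))" for b
  proof (rule abstract_scheme[where miss = "miss0 K" and zt = "zt0 K" and slot = "slot0 K"])
    show "N \<ge> 1" by (rule assms(1))
  next
    fix u s assume "u < K" "s < (2::nat)"
    then show "zt0 K u s \<noteq> u" using K3 by (auto simp: zt_expl)
  next
    fix u s y assume h: "u < K" "s < (2::nat)" "y < K" "y \<noteq> u" "y \<noteq> zt0 K u s"
    from C1[OF K3 h] obtain x a where xa: "slot0 K u s y = pk (K - 2) x a" "x < K" "1 \<le> a" "a \<le> K - 2"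
      "(x = y \<and> (x + a) mod K = zt0 K u s) \<or> (x = zt0 K u s \<and> (x + a) mod K = y)" by blast
    have "slot0 K u s y < K * (K - 2)" unfolding xa(1) by (rule pk_lt[OF xa(2-4)])
    moreover have mw: "miss0 K w (slot0 K u s y) \<longleftrightarrow> w = x \<or> w = (x + a) mod K" for w
      unfolding xa(1) by (rule miss_pk[OF K3 xa(2-4)])
    moreover have "\<forall>w<K. miss0 K w (slot0 K u s y) \<longleftrightarrow> w = y \<or> w = zt0 K u s"
      unfolding mw using xa(5) by (elim disjE conjE) auto
    ultimately show "slot0 K u s y < K * (K - 2) \<and> (\<forall>w<K. miss0 K w (slot0 K u s y) \<longleftrightarrow> w = y \<or> w = zt0 K u s)"
      by blast
  next
    fix y q assume h: "y < K" "q < K * (K - 2)" "miss0 K y q"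
    show "\<exists>u<K. \<exists>s<2. y \<noteq> u \<and> y \<noteq> zt0 K u s \<and> slot0 K u s y = q"
      by (rule C2[OF K3 h])
  next
    fix y assume y: "y < K"
    have c: "card {q. q < K * (K - 2) \<and> \<not> miss0 K y q} \<le> (K - 2) * (K - 2)" by (rule C3[OF K3 y])
    have "real N * real (card {q. q < K * (K - 2) \<and> \<not> miss0 K y q}) \<le> real N * real ((K - 2) * (K - 2))"
    proof -
      have "real (card {q. q < K * (K - 2) \<and> \<not> miss0 K y q}) \<le> real ((K - 2) * (K - 2))"
        using c by (simp only: of_nat_le_iff)
      then show ?thesis using N0 by (intro mult_left_mono) auto
    qed
    also have "\<dots> = real N * ((real K - 2) * (real K - 2))" using rK2 by simp
    also have "\<dots> = M * (real K * (real K - 2))" unfolding Mv using Kpos by (simp add: field_simps)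
    also have "\<dots> = M * real (K * (K - 2))" using rK2 by simp
    finally show "real N * real (card {q. q < K * (K - 2) \<and> \<not> miss0 K y q}) \<le> M * real (K * (K - 2))" .
  qed
  have F1: "K * (K - 2) \<ge> 1" using K3 by simp
  show ?thesis unfolding achievable_with_subpack_def using F1 scheme R by simp
qed

end
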